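(* Let $n\ge 1$. Every optimal $n$-town $S$ is convex, i.e., every point of $\mathbb{Z}\times\mathbb{Z}$ lying in the convex hull of $S$ belongs to $S$.
   Context: An $n$-town is a set $S\subset\mathbb{Z}\times\mathbb{Z}$ of exactly $n$ distinct grid points. Its cost is $c(S)=\frac12\sum_{s\in S}\sum_{t\in S}\|s-t\|_1$ (sum of Manhattan distances over all unordered pairs). An $n$-town is optimal if its cost is minimum among all $n$-towns. *)

theory Defs
  imports "HOL-Analysis.Analysis"
begin

definition l1dist :: "int \<times> int \<Rightarrow> int \<times> int \<Rightarrow> int" where
  "l1dist s t = \<bar>fst s - fst t\<bar> + \<bar>snd s - snd t\<bar>"

definition is_town :: "nat \<Rightarrow> (int \<times> int) set \<Rightarrow> bool" where
  "is_town n S \<longleftrightarrow> finite S \<and> card S = n"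

text \<open>Cost: half the sum over all ordered pairs, i.e. the sum over unordered pairs.\<close>
definition town_cost :: "(int \<times> int) set \<Rightarrow> real" where
  "town_cost S = (1/2) * (\<Sum>s\<in>S. \<Sum>t\<in>S. real_of_int (l1dist s t))"

definition optimal_town :: "nat \<Rightarrow> (int \<times> int) set \<Rightarrow> bool" where
  "optimal_town n S \<longleftrightarrow> is_town n S \<and> (\<forall>T. is_town n T \<longrightarrow> town_cost S \<le> town_cost T)"

definition to_real2 :: "int \<times> int \<Rightarrow> real \<times> real" where
  "to_real2 p = (real_of_int (fst p), real_of_int (snd p))"

definition grid_convex :: "(int \<times> int) set \<Rightarrow> bool" where
  "grid_convex S \<longleftrightarrow> (\<forall>p. to_real2 p \<in> convex hull (to_real2 ` S) \<longrightarrow> p \<in> S)"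

end

theory Submission
  imports Defs
begin

lemma abs_comb_le:
  fixes t a b :: real
  assumes "0 \<le> t" "t \<le> 1"
  shows "\<bar>(1 - t) * a + t * b\<bar> \<le> (1 - t) * \<bar>a\<bar> + t * \<bar>b\<bar>"
proof -
  have "\<bar>(1 - t) * a + t * b\<bar> \<le> \<bar>(1 - t) * a\<bar> + \<bar>t * b\<bar>" by (rule abs_triangle_ineq)
  also have "\<dots> = (1 - t) * \<bar>a\<bar> + t * \<bar>b\<bar>" using assms by (simp add: abs_mult)
  finally show ?thesis .
qed

lemma term_convex:
  "convex_on UNIV (\<lambda>x::real\<times>real. \<bar>fst x - a\<bar> + \<bar>snd x - b\<bar>)"
proof (rule convex_onI)
  fix t :: real and x y :: "real \<times> real"
  assume t: "0 < t" "t < 1"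
  have e1: "fst ((1 - t) *\<^sub>R x + t *\<^sub>R y) - a = (1-t) * (fst x - a) + t * (fst y - a)"
    by (simp add: algebra_simps)
  have e2: "snd ((1 - t) *\<^sub>R x + t *\<^sub>R y) - b = (1-t) * (snd x - b) + t * (snd y - b)"
    by (simp add: algebra_simps)
  show "\<bar>fst ((1 - t) *\<^sub>R x + t *\<^sub>R y) - a\<bar> + \<bar>snd ((1 - t) *\<^sub>R x + t *\<^sub>R y) - b\<bar>
        \<le> (1 - t) * (\<bar>fst x - a\<bar> + \<bar>snd x - b\<bar>) + t * (\<bar>fst y - a\<bar> + \<bar>snd y - b\<bar>)"
    unfolding e1 e2
    using abs_comb_le[of t "fst x - a" "fst y - a"] abs_comb_le[of t "snd x - b" "snd y - b"] t
    by (simp add: algebra_simps)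
qed simp

lemma sum_convex:
  assumes "finite S"
  shows "convex_on UNIV (\<lambda>x::real\<times>real. \<Sum>t\<in>S. \<bar>fst x - a t\<bar> + \<bar>snd x - b t\<bar>)"
  using assms
proof (induction S rule: finite_induct)
  case empty
  then show ?case by (simp add: convex_on_const)
next
  case (insert u F)
  then show ?case using term_convex[of "a u" "b u"] by (simp add: convex_on_add)
qed

lemma l1dist_sym: "l1dist s t = l1dist t s"
  by (simp add: l1dist_def abs_minus_commute)

lemma l1dist_self: "l1dist s s = 0"
  by (simp add: l1dist_def)

lemma l1dist_pos: "s \<noteq> t \<Longrightarrow> l1dist s t > 0"
  by (cases s; cases t) (auto simp: l1dist_def)

lemma double_sum_insert:
  assumes "finite A" "x \<notin> A"
  shows "(\<Sum>s\<in>insert x A. \<Sum>t\<in>insert x A. real_of_int (l1dist s t))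
       = (\<Sum>s\<in>A. \<Sum>t\<in>A. real_of_int (l1dist s t)) + 2 * (\<Sum>t\<in>A. real_of_int (l1dist x t))"
proof -
  have "(\<Sum>s\<in>insert x A. \<Sum>t\<in>insert x A. real_of_int (l1dist s t))
      = (\<Sum>t\<in>A. real_of_int (l1dist x t)) + (\<Sum>s\<in>A. real_of_int (l1dist s x) + (\<Sum>t\<in>A. real_of_int (l1dist s t)))"
    using assms by (simp add: l1dist_self)
  also have "\<dots> = (\<Sum>s\<in>A. \<Sum>t\<in>A. real_of_int (l1dist s t)) + 2 * (\<Sum>t\<in>A. real_of_int (l1dist x t))"
    by (simp add: sum.distrib l1dist_sym[of _ x])
  finally show ?thesis .
qed

theorem lemma2:
  fixes n :: nat and S :: "(int \<times> int) set"
  assumes "n \<ge> 1" and "optimal_town n S"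
  shows "grid_convex S"
  unfolding grid_convex_def
proof (intro allI impI, rule ccontr)
  fix p assume hp: "to_real2 p \<in> convex hull (to_real2 ` S)" and pS: "p \<notin> S"
  have fin: "finite S" and cardS: "card S = n" and opt: "\<And>T. is_town n T \<Longrightarrow> town_cost S \<le> town_cost T"
    using assms(2) by (auto simp: optimal_town_def is_town_def)
  have ne: "S \<noteq> {}" using cardS assms(1) by auto
  define g where "g x = (\<Sum>t\<in>S. real_of_int (l1dist x t))" for x
  define F where "F x = (\<Sum>t\<in>S. \<bar>fst x - real_of_int (fst t)\<bar> + \<bar>snd x - real_of_int (snd t)\<bar>)" for x :: "real \<times> real"
  have Fg: "F (to_real2 x) = g x" for x
    by (simp add: F_def g_def to_real2_def l1dist_def)
  obtain q where qS: "q \<in> S" and qmax: "\<And>s. s \<in> S \<Longrightarrow> g s \<le> g q"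
  proof -
    have "Max (g ` S) \<in> g ` S" using fin ne by simp
    then obtain q where "q \<in> S" "g q = Max (g ` S)" by auto
    moreover have "\<And>s. s \<in> S \<Longrightarrow> g s \<le> Max (g ` S)" using fin by simp
    ultimately show ?thesis using that by metis
  qed
  have conv: "convex_on (convex hull (to_real2 ` S)) F"
    unfolding F_def
    by (rule convex_on_subset[OF sum_convex[OF fin]]) (auto simp: convex_convex_hull)
  have "\<forall>x\<in>to_real2 ` S. F x \<le> g q" using qmax Fg by auto
  from convex_on_convex_hull_bound[OF conv this] hp have "F (to_real2 p) \<le> g q"
    by blast
  then have gp: "g p \<le> g q" by (simp only: Fg)
  have pq: "p \<noteq> q" using pS qS by auto
  define A where "A = S - {q}"
  have finA: "finite A" and qA: "q \<notin> A" and pA: "p \<notin> A" using fin pS by (auto simp: A_def)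
  have Seq: "S = insert q A" using qS by (auto simp: A_def)
  define T where "T = insert p A"
  have townT: "is_town n T"
    unfolding is_town_def T_def using finA pA qA cardS Seq by simp
  have gq: "g q = (\<Sum>t\<in>A. real_of_int (l1dist q t))"
    unfolding g_def Seq using finA qA by (simp add: l1dist_self)
  have gp': "g p = real_of_int (l1dist p q) + (\<Sum>t\<in>A. real_of_int (l1dist p t))"
    unfolding g_def Seq using finA qA by simp
  have "(\<Sum>t\<in>A. real_of_int (l1dist p t)) < (\<Sum>t\<in>A. real_of_int (l1dist q t))"
    using gp gq gp' l1dist_pos[OF pq] by linarith
  then have "town_cost T < town_cost S"
    unfolding town_cost_def T_def
    using double_sum_insert[OF finA pA] double_sum_insert[OF finA qA] Seq by simp
  with opt[OF townT] show False by simp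
qed

end
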